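(* Let $\alpha,n\in\mathbb{N}$ and let $l$ be an integer with $l\geqslant\lfloor n/2^{\alpha}\rfloor\geqslant1$ and $$l\equiv\Big\lfloor\frac n{2^{\alpha}}\Big\rfloor\pmod{2^{\lfloor\log_2(n/2^{\alpha})\rfloor}}.$$ Then $$\operatorname{ord}_2\Bigg(\sum_{k\equiv0\ (\mathrm{mod}\ 2^{\alpha})}\binom nk(-1)^k\Big(\frac k{2^{\alpha}}\Big)^l\Bigg)=\operatorname{ord}_2\Big(\Big\lfloor\frac n{2^{\alpha}}\Big\rfloor!\Big).$$
   Context: $\operatorname{ord}_2$ denotes the $2$-adic order. The sum runs over all integers $k\equiv 0\pmod{2^\alpha}$, with $\binom nk=0$ unless $0\le k\le n$. *)

theory Defs
  imports "HOL-Number_Theory.Number_Theory" "HOL-Computational_Algebra.Computational_Algebra"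
begin

end

theory Submission
  imports Defs "HOL-Combinatorics.Stirling"
begin

abbreviation v2 :: "int \<Rightarrow> nat" where "v2 x \<equiv> multiplicity (2::int) x"

lemma fact2: "\<exists>w. odd w \<and> fact (2*m) = (2::nat)^m * fact m * w"
proof (induction m)
  case 0 then show ?case by auto
next
  case (Suc m)
  then obtain w where w: "odd w" "fact (2*m) = (2::nat)^m * fact m * w" by blast
  have "fact (2 * Suc m) = (2*m+2) * (2*m+1) * (fact (2*m) :: nat)"
    by (simp add: algebra_simps fact_Suc)
  also have "\<dots> = (2*m+2) * (2*m+1) * (2^m * fact m * w)" using w(2) by simp
  also have "\<dots> = 2^Suc m * fact (Suc m) * ((2*m+1)*w)"
    by (simp add: fact_Suc algebra_simps)
  finally show ?case using w(1) by (intro exI[of _ "(2*m+1)*w"]) auto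
qed

lemma v2_int: "v2 (int x) = multiplicity (2::nat) x"
proof (cases "x = 0")
  case True then show ?thesis by simp
next
  case False
  obtain y where y: "x = 2 ^ multiplicity 2 x * y" "\<not> 2 dvd y"
    by (rule multiplicity_decompose'[of x 2]) (use False in auto)
  have "int x = 2 ^ multiplicity 2 x * int y" using y(1) by (metis of_nat_mult of_nat_numeral of_nat_power)
  moreover have "\<not> (2::int) dvd int y" using y(2) by presburger
  ultimately show ?thesis by (intro multiplicity_decomposeI) auto
qed

lemma v2_mult: "x \<noteq> 0 \<Longrightarrow> y \<noteq> 0 \<Longrightarrow> v2 (x*y) = v2 x + v2 y"
  by (rule prime_elem_multiplicity_mult_distrib) auto

lemma v2_pow2: "v2 (2^k * x) = k + v2 x" if "x \<noteq> 0"
  using that by (simp add: v2_mult multiplicity_prime_power)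

lemma v2_odd: "odd x \<Longrightarrow> v2 x = 0"
  by (simp add: not_dvd_imp_multiplicity_0)

lemma v2_fact2: "v2 (fact (2*m)) = m + v2 (fact m)"
proof -
  obtain w where w: "odd w" "fact (2*m) = (2::nat)^m * fact m * w" using fact2 by blast
  have "(fact (2*m)::int) = 2^m * (fact m * int w)" using w(2)
    by (metis (mono_tags, lifting) mult.assoc of_nat_fact of_nat_mult of_nat_numeral of_nat_power)
  moreover have "odd (int w)" using w(1) by simp
  moreover have "w \<noteq> 0" using w(1) odd_pos by auto
  ultimately show ?thesis
    by (simp add: v2_pow2 v2_mult v2_odd)
qed

lemma v2_fact_Suc: "v2 (fact (Suc a)) = v2 (int (Suc a)) + v2 (fact a)"
  by (simp add: fact_Suc v2_mult[symmetric] del: of_nat_Suc)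

lemma v2_fact_lt: "a \<ge> 1 \<Longrightarrow> v2 (fact a) < a"
proof (induction a rule: less_induct)
  case (less a)
  obtain m where "a = 2*m \<or> a = 2*m+1" by (metis oddE evenE)
  then show ?case
  proof
    assume a: "a = 2*m"
    then have "m \<ge> 1" "m < a" using less.prems by auto
    then show ?thesis using less.IH[of m] a v2_fact2[of m] by simp
  next
    assume a: "a = 2*m+1"
    have "v2 (fact a) = v2 (int a) + v2 (fact (2*m))" using a v2_fact_Suc[of "2*m"] by simp
    also have "v2 (int a) = 0" using a by (intro v2_odd) simp
    finally have e: "v2 (fact a) = v2 (fact (2*m))" by simp
    show ?thesis
    proof (cases "m = 0")
      case True then show ?thesis using e a by simp
    next
      case False
      then show ?thesis using less.IH[of m] a v2_fact2[of m] e by simp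
    qed
  qed
qed

lemma v2_fact_le: "v2 (fact a) \<le> a"
  using v2_fact_lt[of a] by (cases "a = 0") auto

lemma v2_fact_mono: "a \<le> b \<Longrightarrow> v2 (fact a) \<le> v2 (fact b)"
  by (intro dvd_imp_multiplicity_le) (auto intro: fact_dvd)


lemma even_choose_pow2:
  assumes "0 < k" "k < 2^L"
  shows "even ((2::nat)^L choose k)"
proof (rule ccontr)
  assume o: "odd ((2::nat)^L choose k)"
  obtain L' where L': "(2::nat)^L = Suc L'" using assms by (cases "(2::nat)^L") auto
  obtain k' where k': "k = Suc k'" using assms by (cases k) auto
  have "Suc L' * (L' choose k') = (Suc L' choose Suc k') * Suc k'" by (rule Suc_times_binomial_eq)
  then have "(2::nat)^L dvd (2^L choose k) * k" using L' k' by (metis dvd_triv_left)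
  moreover have "coprime ((2::nat)^L) (2^L choose k)" using o by simp
  ultimately have "(2::nat)^L dvd k" using coprime_dvd_mult_right_iff by blast
  then show False using assms by (auto dest: dvd_imp_le)
qed

lemma choose_shift_pow2_mod2:
  assumes "b < 2^L"
  shows "even ((2^L + x) choose b) = even (x choose b)"
proof -
  have "(2^L + x) choose b = (\<Sum>k\<le>b. (2^L choose k) * (x choose (b - k)))"
    by (rule vandermonde[symmetric])
  also have "\<dots> = (x choose b) + (\<Sum>k\<in>{1..b}. (2^L choose k) * (x choose (b - k)))"
    by (simp add: atMost_atLeast0 sum.atLeast_Suc_atMost)
  finally have e: "(2^L + x) choose b = (x choose b) + (\<Sum>k\<in>{1..b}. (2^L choose k) * (x choose (b - k)))" .
  have "even (\<Sum>k\<in>{1..b}. ((2::nat)^L choose k) * (x choose (b - k)))"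
    using assms by (intro dvd_sum) (auto intro: dvd_mult2 even_choose_pow2)
  then show ?thesis using e by simp
qed

lemma odd_choose_lucas:
  assumes "b < 2^L"
  shows "odd ((a * 2^L + b) choose b)"
proof (induction a)
  case 0 then show ?case by simp
next
  case (Suc a)
  have "Suc a * 2^L + b = 2^L + (a * 2^L + b)" by simp
  then show ?case using Suc choose_shift_pow2_mod2[OF assms, of "a * 2^L + b"] by (simp add: add.assoc)
qed

lemma stirling_parity:
  assumes "m \<ge> 1"
  shows "even (Stirling (m + d) m) = even ((d + (m+1) div 2 - 1) choose ((m+1) div 2 - 1))"
  using assms
proof (induction m arbitrary: d rule: nat_induct_at_least)
  case base
  have "Stirling (Suc d) (Suc 0) = 1" by (induct d) simp_all
  then show ?case by simp
next
  case (Suc m)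
  note IHm = Suc.IH
  note m1 = Suc.hyps(1)
  show ?case
  proof (induction d)
    case 0 then show ?case by simp
  next
    case (Suc d)
    have rec: "Stirling (Suc m + Suc d) (Suc m) = Suc m * Stirling (Suc m + d) (Suc m) + Stirling (m + Suc d) m"
      by simp
    show ?case
    proof (cases "even m")
      case True
      then have c: "(Suc m + 1) div 2 = (m+1) div 2 + 1" "(m+1) div 2 \<ge> 1"
        using m1 by presburger+
      have p: "(Suc d + (Suc m + 1) div 2 - 1) choose ((Suc m + 1) div 2 - 1) =
         ((Suc d + (m+1) div 2 - 1) choose ((m+1) div 2 - 1)) + ((d + (Suc m + 1) div 2 - 1) choose ((Suc m + 1) div 2 - 1))"
      proof -
        obtain c0 where c0: "(m+1) div 2 = Suc c0" using c(2) by (cases "(m+1) div 2") auto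
        show ?thesis unfolding c(1) c0 by simp
      qed
      show ?thesis using rec Suc.IH IHm[of "Suc d"] True p by (simp, blast)
    next
      case False
      then have c: "(Suc m + 1) div 2 = (m+1) div 2" by presburger
      show ?thesis using rec IHm[of "Suc d"] False c by simp
    qed
  qed
qed


definition mu :: "nat \<Rightarrow> int poly \<Rightarrow> nat \<Rightarrow> nat \<Rightarrow> int" where
  "mu N f r t = (\<Sum>k\<le>degree f. if k mod N = r then coeff f k * (2 * int (k div N))^t else 0)"

lemma mu_ext:
  assumes "degree f \<le> D"
  shows "mu N f r t = (\<Sum>k\<le>D. if k mod N = r then coeff f k * (2 * int (k div N))^t else 0)"
  unfolding mu_def
  by (rule sum.mono_neutral_left) (use assms in \<open>auto simp: coeff_eq_0\<close>)

lemma mu_add: "mu N (f + g) r t = mu N f r t + mu N g r t"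
proof -
  let ?D = "max (degree f) (degree g)"
  have "degree (f+g) \<le> ?D" by (rule degree_add_le) auto
  then show ?thesis
    by (simp add: mu_ext[of _ ?D] mu_ext[of f ?D, OF max.cobounded1] mu_ext[of g ?D, OF max.cobounded2]
        sum.distrib[symmetric] algebra_simps; intro sum.cong; simp add: algebra_simps)
qed

lemma mu_smult: "mu N (smult c f) r t = c * mu N f r t"
proof -
  have "mu N (smult c f) r t = (\<Sum>k\<le>degree f. if k mod N = r then coeff (smult c f) k * (2 * int (k div N))^t else 0)"
    by (rule mu_ext) (rule degree_smult_le)
  also have "\<dots> = c * mu N f r t"
    unfolding mu_def sum_distrib_left by (intro sum.cong) auto
  finally show ?thesis .
qed

lemma mu_zero[simp]: "mu N 0 r t = 0"
  unfolding mu_def by (intro sum.neutral) simp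

lemma mu_sum: "mu N (\<Sum>i\<in>A. f i) r t = (\<Sum>i\<in>A. mu N (f i) r t)"
  by (induction A rule: infinite_finite_induct) (auto simp: mu_add)

lemma mu_monom: "mu N (monom c k) r t = (if k mod N = r then c * (2 * int (k div N))^t else 0)"
proof -
  have "mu N (monom c k) r t = (\<Sum>i\<le>k. if i mod N = r then coeff (monom c k) i * (2 * int (i div N))^t else 0)"
    by (rule mu_ext) (simp add: degree_monom_le)
  also have "\<dots> = (\<Sum>i\<le>k. if i = k then (if k mod N = r then c * (2 * int (k div N))^t else 0) else 0)"
    by (intro sum.cong) auto
  also have "\<dots> = (if k mod N = r then c * (2 * int (k div N))^t else 0)"
    by (simp add: sum.delta)
  finally show ?thesis .
qed

lemma mu_X_pos:
  assumes "0 < r" "r < N"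
  shows "mu N (pCons 0 f) r t = mu N f (r - 1) t"
proof -
  let ?g = "\<lambda>f r k. if k mod N = r then coeff f k * (2 * int (k div N))^t else 0"
  have "mu N (pCons 0 f) r t = (\<Sum>k\<le>Suc (degree f). ?g (pCons 0 f) r k)"
    by (rule mu_ext) (rule degree_pCons_le)
  also have "\<dots> = ?g (pCons 0 f) r 0 + (\<Sum>k\<le>degree f. ?g (pCons 0 f) r (Suc k))"
    by (rule sum.atMost_Suc_shift)
  also have "\<dots> = (\<Sum>k\<le>degree f. ?g f (r - 1) k)"
  proof -
    have "?g (pCons 0 f) r 0 = 0" by simp
    moreover have "?g (pCons 0 f) r (Suc k) = ?g f (r - 1) k" for k
      using assms by (auto simp: mod_Suc div_Suc)
    ultimately show ?thesis by simp
  qed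
  finally show ?thesis by (simp add: mu_def)
qed

lemma mu_X_zero:
  assumes "0 < N"
  shows "mu N (pCons 0 f) 0 t = (\<Sum>s\<le>t. of_nat (t choose s) * 2^(t-s) * mu N f (N - 1) s)"
proof -
  let ?g = "\<lambda>f r t k. if k mod N = r then coeff f k * (2 * int (k div N))^t else 0"
  have "mu N (pCons 0 f) 0 t = (\<Sum>k\<le>Suc (degree f). ?g (pCons 0 f) 0 t k)"
    by (rule mu_ext) (rule degree_pCons_le)
  also have "\<dots> = ?g (pCons 0 f) 0 t 0 + (\<Sum>k\<le>degree f. ?g (pCons 0 f) 0 t (Suc k))"
    by (rule sum.atMost_Suc_shift)
  also have "\<dots> = (\<Sum>k\<le>degree f. \<Sum>s\<le>t. of_nat (t choose s) * 2^(t-s) * ?g f (N - 1) s k)"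
  proof -
    have "?g (pCons 0 f) 0 t 0 = 0" by simp
    moreover have "?g (pCons 0 f) 0 t (Suc k) = (\<Sum>s\<le>t. of_nat (t choose s) * 2^(t-s) * ?g f (N - 1) s k)" for k
    proof (cases "Suc (k mod N) = N")
      case True
      have m0: "Suc k mod N = 0" by (simp only: mod_Suc True if_True refl)
      have kN: "k mod N = N - 1" using True by simp
      have d: "Suc k div N = k div N + 1" using m0 by (simp add: div_Suc)
      have "2 * int (Suc k div N) = 2 * int (k div N) + 2" using d by simp
      then have "(2 * int (Suc k div N))^t = (2 * int (k div N) + 2)^t"
        by (simp only:)
      also have "\<dots> = (\<Sum>s\<le>t. of_nat (t choose s) * (2 * int (k div N))^s * 2^(t-s))"
        by (rule binomial_ring)
      finally have e: "(2 * int (Suc k div N))^t = (\<Sum>s\<le>t. of_nat (t choose s) * (2 * int (k div N))^s * 2^(t-s))" .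
      have "?g (pCons 0 f) 0 t (Suc k) = coeff f k * (\<Sum>s\<le>t. of_nat (t choose s) * (2 * int (k div N))^s * 2^(t-s))"
        using m0 e by simp
      also have "\<dots> = (\<Sum>s\<le>t. of_nat (t choose s) * 2^(t-s) * ?g f (N - 1) s k)"
        using kN by (simp add: sum_distrib_left algebra_simps)
      finally show ?thesis . 
    next
      case False
      then have "k mod N \<noteq> N - 1" using assms by auto
      then show ?thesis using False by (simp add: mod_Suc)
    qed
    ultimately show ?thesis by simp
  qed
  also have "\<dots> = (\<Sum>s\<le>t. of_nat (t choose s) * 2^(t-s) * (\<Sum>k\<le>degree f. ?g f (N - 1) s k))"
    by (subst sum.swap) (simp add: sum_distrib_left)
  finally show ?thesis by (simp add: mu_def)
qed

definition good :: "nat \<Rightarrow> nat \<Rightarrow> int poly \<Rightarrow> bool" where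
  "good N e f \<longleftrightarrow> (\<forall>r<N. \<forall>t. (2::int)^e dvd mu N f r t)"

lemma good_add: "good N e f \<Longrightarrow> good N e g \<Longrightarrow> good N e (f + g)"
  by (simp add: good_def mu_add)

lemma good_smult: "good N e f \<Longrightarrow> (2::int)^j dvd c \<Longrightarrow> good N (e + j) (smult c f)"
  by (auto simp: good_def mu_smult power_add mult.commute intro: mult_dvd_mono)

lemma good_mono: "good N e f \<Longrightarrow> e' \<le> e \<Longrightarrow> good N e' f"
  unfolding good_def by (meson dvd_trans le_imp_power_dvd)

lemma good_zero[simp]: "good N e 0"
  by (simp add: good_def)

lemma good_sum: "(\<And>i. i \<in> A \<Longrightarrow> good N e (f i)) \<Longrightarrow> good N e (\<Sum>i\<in>A. f i)"
  by (induction A rule: infinite_finite_induct) (auto intro: good_add)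

lemma good_X:
  assumes "0 < N" "good N e f"
  shows "good N e (pCons 0 f)"
  unfolding good_def
proof (intro allI impI)
  fix r t assume r: "r < N"
  show "(2::int)^e dvd mu N (pCons 0 f) r t"
  proof (cases "r = 0")
    case True
    have "N - 1 < N" using assms by simp
    then show ?thesis using True assms(2) unfolding good_def
      by (simp add: mu_X_zero[OF assms(1)] dvd_sum dvd_mult)
  next
    case False
    then show ?thesis using r assms(2) unfolding good_def by (simp add: mu_X_pos)
  qed
qed

lemma good_mult:
  assumes "0 < N" "good N e f"
  shows "good N e (g * f)"
proof (induction g)
  case 0 then show ?case by simp
next
  case (pCons a g)
  have "good N (e + 0) (smult a f)" using assms(2) by (intro good_smult) auto
  then show ?case using pCons assms by (auto intro: good_add good_X)
qed

lemma binom_monom: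
  "(1 + monom (1::int) K)^b = (\<Sum>s\<le>b. monom (of_nat (b choose s)) (K*s))"
proof -
  have "(monom (1::int) K + 1)^b = (\<Sum>s\<le>b. of_nat (b choose s) * monom 1 K ^ s * 1 ^ (b - s))"
    by (rule binomial_ring)
  also have "\<dots> = (\<Sum>s\<le>b. monom (of_nat (b choose s)) (K*s))"
    by (intro sum.cong) (auto simp: monom_power of_nat_mult_conv_smult smult_monom mult.commute)
  finally show ?thesis by (simp add: add.commute)
qed

lemma mu_binom_monom:
  "mu N ((1 + monom (1::int) K)^b) r t =
     (\<Sum>s\<le>b. if (K*s) mod N = r then int (b choose s) * (2 * int ((K*s) div N))^t else 0)"
  by (simp add: binom_monom mu_sum mu_monom)


definition W :: "nat \<Rightarrow> bool \<Rightarrow> nat \<Rightarrow> int" where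
  "W b q t = (\<Sum>s\<le>b. if even s = q then int (b choose s) * int s ^ t else 0)"

lemma W_0: "W (Suc b) q 0 = 2^b"
proof (cases q)
  case True
  have "W (Suc b) q 0 = (\<Sum>i\<le>Suc b. if even i then of_nat (Suc b choose i) else 0)"
    unfolding W_def using True by (intro sum.cong) auto
  moreover have "2 * (\<Sum>i\<le>Suc b. if even i then of_nat (Suc b choose i) else 0) = (2 ^ Suc b :: int)"
    by (rule choose_even_sum) simp
  ultimately show ?thesis by simp
next
  case False
  have "W (Suc b) q 0 = (\<Sum>i\<le>Suc b. if odd i then of_nat (Suc b choose i) else 0)"
    unfolding W_def using False by (intro sum.cong) auto
  moreover have "2 * (\<Sum>i\<le>Suc b. if odd i then of_nat (Suc b choose i) else 0) = (2 ^ Suc b :: int)"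
    by (rule choose_odd_sum) simp
  ultimately show ?thesis by simp
qed

lemma W_Suc: "W (Suc b) q (Suc t) = int (Suc b) * (\<Sum>w\<le>t. int (t choose w) * W b (\<not> q) w)"
proof -
  let ?f = "\<lambda>s. if even s = q then int (Suc b choose s) * int s ^ Suc t else 0"
  have "W (Suc b) q (Suc t) = ?f 0 + (\<Sum>s\<le>b. ?f (Suc s))"
    unfolding W_def by (rule sum.atMost_Suc_shift)
  also have "\<dots> = (\<Sum>s\<le>b. if even s = (\<not> q) then int (Suc b) * (int (b choose s) * (int s + 1) ^ t) else 0)"
  proof -
    have "?f (Suc s) = (if even s = (\<not> q) then int (Suc b) * (int (b choose s) * (int s + 1) ^ t) else 0)" for s
    proof -
      have "int (Suc b choose Suc s) * int (Suc s) = int (Suc b) * int (b choose s)"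
        using Suc_times_binomial_eq[of b s] by (metis of_nat_mult)
      then have "int (Suc b choose Suc s) * int (Suc s) ^ Suc t = int (Suc b) * (int (b choose s) * (int s + 1) ^ t)"
      proof -
        have "int (Suc b choose Suc s) * int (Suc s) ^ Suc t = (int (Suc b choose Suc s) * int (Suc s)) * int (Suc s) ^ t"
          by (simp only: power_Suc mult.assoc)
        also have "\<dots> = int (Suc b) * (int (b choose s) * (int s + 1) ^ t)"
          by (simp only: \<open>int (Suc b choose Suc s) * int (Suc s) = int (Suc b) * int (b choose s)\<close>) (simp add: mult.assoc add.commute)
        finally show ?thesis .
      qed
      then show ?thesis by auto
    qed
    then show ?thesis by (simp only:) simp
  qed
  also have "\<dots> = int (Suc b) * (\<Sum>s\<le>b. if even s = (\<not> q) then int (b choose s) * (int s + 1) ^ t else 0)"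
    unfolding sum_distrib_left by (intro sum.cong refl) (simp del: of_nat_Suc)
  also have "(\<Sum>s\<le>b. if even s = (\<not> q) then int (b choose s) * (int s + 1) ^ t else 0)
      = (\<Sum>s\<le>b. \<Sum>w\<le>t. int (t choose w) * (if even s = (\<not> q) then int (b choose s) * int s ^ w else 0))"
  proof (intro sum.cong refl)
    fix s
    have "(int s + 1) ^ t = (\<Sum>w\<le>t. of_nat (t choose w) * int s ^ w * 1 ^ (t - w))"
      by (rule binomial_ring)
    then show "(if even s = (\<not> q) then int (b choose s) * (int s + 1) ^ t else 0)
      = (\<Sum>w\<le>t. int (t choose w) * (if even s = (\<not> q) then int (b choose s) * int s ^ w else 0))"
      by (simp add: sum_distrib_left algebra_simps)
  qed
  also have "\<dots> = (\<Sum>w\<le>t. int (t choose w) * W b (\<not> q) w)"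
    by (subst sum.swap) (simp add: W_def sum_distrib_left)
  finally show ?thesis .
qed

lemma v2_fact_Suc_dvd: "(2::int) ^ v2 (fact (Suc b)) dvd int (Suc b) * 2 ^ v2 (fact b)"
proof -
  have "(2::int) ^ v2 (fact (Suc b)) = 2 ^ v2 (int (Suc b)) * 2 ^ v2 (fact b)"
    unfolding v2_fact_Suc power_add ..
  also have "\<dots> dvd int (Suc b) * 2 ^ v2 (fact b)"
    by (intro mult_dvd_mono multiplicity_dvd) auto
  finally show ?thesis .
qed

lemma W_dvd: "(2::int) ^ v2 (fact b) dvd W b q t"
proof (induction b arbitrary: q t)
  case 0 then show ?case by simp
next
  case (Suc b)
  show ?case
  proof (cases t)
    case 0
    have "v2 (fact (Suc b)) \<le> b" using v2_fact_lt[of "Suc b"] by simp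
    then show ?thesis using 0 by (simp add: W_0 le_imp_power_dvd)
  next
    case (Suc t')
    have "(2::int) ^ v2 (fact b) dvd (\<Sum>w\<le>t'. int (t' choose w) * W b (\<not> q) w)"
      using Suc.IH by (intro dvd_sum dvd_mult)
    then have "int (Suc b) * 2 ^ v2 (fact b) dvd int (Suc b) * (\<Sum>w\<le>t'. int (t' choose w) * W b (\<not> q) w)"
      by (rule mult_dvd_mono[OF dvd_refl])
    moreover have "W (Suc b) q t = int (Suc b) * (\<Sum>w\<le>t'. int (t' choose w) * W b (\<not> q) w)"
      by (simp only: \<open>t = Suc t'\<close> W_Suc)
    ultimately show ?thesis using v2_fact_Suc_dvd[of b] by (metis dvd_trans)
  qed
qed


lemma smult2: "smult 2 p = 2 * (p :: int poly)"
  by (simp add: numeral_poly)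

lemma good_h:
  assumes "0 < K"
  shows "good (2*K) (v2 (fact b)) ((1 + monom 1 K)^b)"
  unfolding good_def
proof (intro allI impI)
  fix r t assume r: "r < 2*K"
  have md: "(K*s) mod (2*K) = K * (s mod 2)" "(K*s) div (2*K) = s div 2" for s
    using assms by (simp_all add: mult.commute[of 2 K] mod_mult_mult1 div_mult_mult1)
  have mu: "mu (2*K) ((1 + monom 1 K)^b) r t =
     (\<Sum>s\<le>b. if K * (s mod 2) = r then int (b choose s) * (2 * int (s div 2))^t else 0)"
    by (simp only: mu_binom_monom md)
  consider "r = 0" | "r = K" | "r \<noteq> 0" "r \<noteq> K" by blast
  then show "(2::int) ^ v2 (fact b) dvd mu (2*K) ((1 + monom 1 K)^b) r t"
  proof cases
    case 1
    have "mu (2*K) ((1 + monom 1 K)^b) r t = W b True t"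
      unfolding mu W_def using 1 assms by (intro sum.cong refl) (auto elim!: evenE)
    then show ?thesis by (simp add: W_dvd)
  next
    case 2
    have "mu (2*K) ((1 + monom 1 K)^b) r t =
        (\<Sum>s\<le>b. \<Sum>w\<le>t. int (t choose w) * (-1)^(t-w) * (if even s = False then int (b choose s) * int s ^ w else 0))"
      unfolding mu
    proof (intro sum.cong refl)
      fix s
      show "(if K * (s mod 2) = r then int (b choose s) * (2 * int (s div 2))^t else 0) =
        (\<Sum>w\<le>t. int (t choose w) * (-1)^(t-w) * (if even s = False then int (b choose s) * int s ^ w else 0))"
      proof (cases "even s")
        case True
        then show ?thesis using 2 assms by simp
      next
        case False
        then have "2 * int (s div 2) = int s + (-1)" by (auto elim!: oddE)
        then have "(2 * int (s div 2))^t = (\<Sum>w\<le>t. of_nat (t choose w) * int s ^ w * (-1) ^ (t - w))"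
          by (simp only: binomial_ring)
        then show ?thesis using False 2 assms by (simp add: sum_distrib_left algebra_simps mod2_eq_if)
      qed
    qed
    also have "\<dots> = (\<Sum>w\<le>t. int (t choose w) * (-1)^(t-w) * W b False w)"
      by (subst sum.swap) (simp add: W_def sum_distrib_left)
    finally show ?thesis by (simp add: dvd_sum dvd_mult W_dvd)
  next
    case 3
    have "mu (2*K) ((1 + monom 1 K)^b) r t = 0"
      unfolding mu using 3 by (intro sum.neutral) (auto simp: mod2_eq_if)
    then show ?thesis by simp
  qed
qed

lemma pow2_split: "\<exists>\<rho>. (1 + monom (1::int) 1)^(2^\<beta>) = 1 + monom 1 (2^\<beta>) + 2 * \<rho>"
proof (induction \<beta>)
  case 0 then show ?case by (intro exI[of _ 0]) simp
next
  case (Suc \<beta>)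
  then obtain \<rho> where \<rho>: "(1 + monom (1::int) 1)^(2^\<beta>) = 1 + monom 1 (2^\<beta>) + 2 * \<rho>" by blast
  let ?Y = "monom (1::int) (2^\<beta>)"
  have Y2: "?Y * ?Y = monom 1 (2^Suc \<beta>)" by (simp add: mult_monom mult_2)
  have "(1 + monom (1::int) 1)^(2^Suc \<beta>) = ((1 + monom (1::int) 1)^(2^\<beta>))^2"
    by (simp add: power_mult[symmetric] mult.commute)
  also have "\<dots> = (1 + ?Y + 2 * \<rho>) * (1 + ?Y + 2 * \<rho>)" by (simp only: \<rho> power2_eq_square)
  also have "\<dots> = 1 + ?Y * ?Y + 2 * (?Y + 2 * \<rho> + 2 * \<rho> * ?Y + 2 * \<rho> * \<rho>)"
    by (simp add: algebra_simps)
  finally show ?case unfolding Y2 by blast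
qed

lemma good_pow:
  assumes "\<alpha> \<ge> 1"
  shows "good (2^\<alpha>) (v2 (fact (n div 2^(\<alpha>-1)))) ((1 + monom (1::int) 1)^n)"
proof -
  define K where "K = (2::nat)^(\<alpha>-1)"
  have N: "(2::nat)^\<alpha> = 2*K" using assms unfolding K_def by (metis Suc_diff_le diff_Suc_1 power_Suc)
  have K0: "0 < K" unfolding K_def by simp
  define q where "q = n div K"
  obtain \<rho> where \<rho>: "(1 + monom (1::int) 1)^K = 1 + monom 1 K + 2 * \<rho>"
    using pow2_split unfolding K_def by blast
  let ?h = "1 + monom (1::int) K"
  have "(1 + monom (1::int) 1)^(K*q) = ((1 + monom (1::int) 1)^K)^q"
    by (rule power_mult)
  also have "\<dots> = (2 * \<rho> + ?h)^q"
    by (simp only: \<rho>) (simp add: ac_simps)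
  also have "\<dots> = (\<Sum>a\<le>q. of_nat (q choose a) * (2 * \<rho>)^a * ?h^(q-a))"
    by (rule binomial_ring)
  finally have e: "(1 + monom (1::int) 1)^(K*q) = (\<Sum>a\<le>q. of_nat (q choose a) * (2 * \<rho>)^a * ?h^(q-a))" .
  have "good (2*K) (v2 (fact q)) ((1 + monom (1::int) 1)^(K*q))"
    unfolding e
  proof (intro good_sum)
    fix a assume a: "a \<in> {..q}"
    have t: "of_nat (q choose a) * (2 * \<rho>)^a * ?h^(q-a) = smult (int (q choose a) * 2^a) (\<rho>^a * ?h^(q-a))"
    proof -
      have p: "(2 * \<rho>)^a = smult (2^a) (\<rho>^a)" by (simp add: smult2[symmetric] smult_power)
      show ?thesis by (simp only: p of_nat_mult_conv_smult mult_smult_left smult_smult mult.assoc)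
    qed
    have g1: "good (2*K) (v2 (fact (q-a))) (\<rho>^a * ?h^(q-a))"
      using K0 good_h[OF K0] by (intro good_mult) auto
    have dv: "(2::int)^(v2 (int (q choose a)) + a) dvd int (q choose a) * 2^a"
      by (simp add: power_add mult_dvd_mono multiplicity_dvd)
    have g2: "good (2*K) (v2 (fact (q-a)) + (v2 (int (q choose a)) + a)) (smult (int (q choose a) * 2^a) (\<rho>^a * ?h^(q-a)))"
      by (rule good_smult[OF g1 dv])
    have "fact a * fact (q - a) * int (q choose a) = fact q"
      using binomial_fact_lemma[of a q] a by (metis of_nat_fact of_nat_mult atMost_iff)
    then have "v2 (fact q) = v2 (fact a) + v2 (fact (q-a)) + v2 (int (q choose a))"
      by (metis v2_mult fact_nonzero mult_eq_0_iff of_nat_eq_0_iff binomial_eq_0_iff not_le a atMost_iff)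
    then have "v2 (fact q) \<le> v2 (fact (q-a)) + (v2 (int (q choose a)) + a)"
      using v2_fact_le[of a] by simp
    then show "good (2*K) (v2 (fact q)) (of_nat (q choose a) * (2 * \<rho>)^a * ?h^(q-a))"
      unfolding t using g2 good_mono by blast
  qed
  then have "good (2*K) (v2 (fact q)) ((1 + monom (1::int) 1)^(n - K*q) * (1 + monom (1::int) 1)^(K*q))"
    using K0 by (intro good_mult) auto
  moreover have "n - K*q + K*q = n" unfolding q_def by (simp add: mult.commute)
  ultimately have "good (2*K) (v2 (fact q)) ((1 + monom (1::int) 1)^n)"
    by (metis power_add)
  then show ?thesis unfolding N q_def K_def .
qed


lemma moment_bound:
  assumes "\<alpha> \<ge> 1"
  shows "(2::int)^v2 (fact (n div 2^(\<alpha>-1))) dvd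
    (\<Sum>s\<le>n. if s mod 2^\<alpha> = 0 then int (n choose s) * (2 * int (s div 2^\<alpha>))^t else 0)"
proof -
  have "good (2^\<alpha>) (v2 (fact (n div 2^(\<alpha>-1)))) ((1 + monom (1::int) 1)^n)"
    by (rule good_pow[OF assms])
  then have "(2::int)^v2 (fact (n div 2^(\<alpha>-1))) dvd mu (2^\<alpha>) ((1 + monom (1::int) 1)^n) 0 t"
    unfolding good_def by simp
  moreover have "mu (2^\<alpha>) ((1 + monom (1::int) 1)^n) 0 t =
    (\<Sum>s\<le>n. if s mod 2^\<alpha> = 0 then int (n choose s) * (2 * int (s div 2^\<alpha>))^t else 0)"
    unfolding mu_binom_monom by (intro sum.cong refl) auto
  ultimately show ?thesis by simp
qed

definition Dalt :: "nat \<Rightarrow> nat \<Rightarrow> int" where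
  "Dalt b t = W b True t - W b False t"

lemma Dalt_zero: "t < b \<Longrightarrow> Dalt b t = 0"
proof (induction b arbitrary: t)
  case 0 then show ?case by simp
next
  case (Suc b)
  show ?case
  proof (cases t)
    case 0 then show ?thesis by (simp add: Dalt_def W_0)
  next
    case (Suc t')
    then have "t' < b" using Suc.prems by simp
    then have z: "\<forall>w\<le>t'. Dalt b w = 0" using Suc.IH by auto
    have "Dalt (Suc b) t = int (Suc b) * (\<Sum>w\<le>t'. int (t' choose w) * (W b False w - W b True w))"
      unfolding Dalt_def by (simp only: \<open>t = Suc t'\<close> W_Suc) (simp add: algebra_simps sum_subtractf)
    also have "\<dots> = 0" using z by (simp add: Dalt_def)
    finally show ?thesis .
  qed
qed

lemma alt_moment: "t < n \<Longrightarrow> (\<Sum>k\<le>n. int (n choose k) * (-1)^k * int k ^ t) = 0"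
proof -
  assume "t < n"
  have "(\<Sum>k\<le>n. int (n choose k) * (-1)^k * int k ^ t) = Dalt n t"
    unfolding Dalt_def W_def sum_subtractf[symmetric] by (intro sum.cong) auto
  then show ?thesis using Dalt_zero[OF \<open>t < n\<close>] by simp
qed

definition ff :: "nat \<Rightarrow> nat \<Rightarrow> int" where
  "ff i j = (\<Prod>s<i. int j - int s)"

definition ffp :: "nat \<Rightarrow> int poly" where
  "ffp i = (\<Prod>s<i. [:- int s, 1:])"

lemma ff_poly: "ff i j = poly (ffp i) (int j)"
  by (simp add: ff_def ffp_def poly_prod)

lemma degree_ffp: "degree (ffp i) \<le> i"
proof -
  have "degree (ffp i) \<le> (\<Sum>s<i. degree [:- int s, 1:])"
    unfolding ffp_def using degree_prod_sum_le[of "{..<i}" "\<lambda>s. [:- int s, 1:]"] by (simp add: o_def)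
  also have "\<dots> = i" by simp
  finally show ?thesis .
qed

lemma ff_Suc: "ff (Suc i) j = ff i j * (int j - int i)"
  by (simp add: ff_def)

lemma ff_zero_less: "j < i \<Longrightarrow> ff i j = 0"
  unfolding ff_def by (rule prod_zero) auto

lemma ff_same: "ff m m = fact m"
proof (induction m)
  case 0 then show ?case by (simp add: ff_def)
next
  case (Suc m)
  have "ff (Suc m) (Suc m) = (\<Prod>s<Suc m. int (Suc m) - int s)" by (simp add: ff_def)
  also have "\<dots> = (\<Prod>s<m. int (Suc m) - int s) * (int (Suc m) - int m)" by simp
  also have "(\<Prod>s<m. int (Suc m) - int s) = (\<Prod>s<m. int m - int s) * int (Suc m)"
  proof -
    have "(\<Prod>s<Suc m. int (Suc m) - int s) = (\<Prod>s<m. int (Suc m) - int (Suc s)) * (int (Suc m) - int 0)"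
      by (subst prod.lessThan_Suc_shift) (simp add: mult.commute)
    moreover have "(\<Prod>s<Suc m. int (Suc m) - int s) = (\<Prod>s<m. int (Suc m) - int s) * (int (Suc m) - int m)"
      by simp
    ultimately show ?thesis by simp
  qed
  finally show ?case using Suc by (simp add: ff_def fact_Suc)
qed

lemma stirling_ff: "int j ^ l = (\<Sum>i\<le>l. int (Stirling l i) * ff i j)"
proof (induction l)
  case 0 then show ?case by (simp add: ff_def)
next
  case (Suc l)
  let ?S = "\<lambda>i. int (Stirling l i)"
  have "(\<Sum>i\<le>Suc l. int (Stirling (Suc l) i) * ff i j)
      = int (Stirling (Suc l) 0) * ff 0 j + (\<Sum>i\<le>l. int (Stirling (Suc l) (Suc i)) * ff (Suc i) j)"
    by (rule sum.atMost_Suc_shift)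
  also have "\<dots> = (\<Sum>i\<le>l. int (Suc i) * ?S (Suc i) * ff (Suc i) j) + (\<Sum>i\<le>l. ?S i * ff (Suc i) j)"
    by (simp add: sum.distrib algebra_simps)
  also have "(\<Sum>i\<le>l. int (Suc i) * ?S (Suc i) * ff (Suc i) j) = (\<Sum>i\<le>Suc l. int i * ?S i * ff i j)"
    by (subst sum.atMost_Suc_shift) simp
  also have "\<dots> = (\<Sum>i\<le>l. int i * ?S i * ff i j)"
    by simp
  also have "(\<Sum>i\<le>l. int i * ?S i * ff i j) + (\<Sum>i\<le>l. ?S i * ff (Suc i) j) = (\<Sum>i\<le>l. ?S i * ff i j * int j)"
    by (subst sum.distrib[symmetric]) (intro sum.cong refl; simp add: ff_Suc algebra_simps)
  also have "\<dots> = int j ^ Suc l"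
    using Suc by (simp add: sum_distrib_left algebra_simps)
  finally show ?case by simp
qed


definition Asum :: "nat \<Rightarrow> nat \<Rightarrow> (nat \<Rightarrow> int) \<Rightarrow> int" where
  "Asum n N f = (\<Sum>k\<in>{k. k \<le> n \<and> N dvd k}. int (n choose k) * (-1)^k * f (k div N))"

lemma Asum_sum: "Asum n N (\<lambda>j. \<Sum>i\<in>I. g i j) = (\<Sum>i\<in>I. Asum n N (g i))"
  unfolding Asum_def by (subst sum.swap) (simp add: sum_distrib_left)

lemma Asum_cmult: "Asum n N (\<lambda>j. c * f j) = c * Asum n N f"
  unfolding Asum_def by (simp add: sum_distrib_left algebra_simps)

lemma Asum_poly:
  assumes "degree p < m" "\<forall>t<m. d dvd Asum n N (\<lambda>j. int j ^ t)"
  shows "d dvd Asum n N (\<lambda>j. poly p (int j))"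
proof -
  have "Asum n N (\<lambda>j. poly p (int j)) = (\<Sum>i\<le>degree p. coeff p i * Asum n N (\<lambda>j. int j ^ i))"
    by (simp add: poly_altdef Asum_sum Asum_cmult)
  also have "d dvd \<dots>" using assms by (intro dvd_sum dvd_mult) auto
  finally show ?thesis .
qed

lemma assembly:
  assumes N: "N > 0" and m: "m = n div N" and lm: "m \<le> l"
    and mom: "\<forall>t<m. d dvd Asum n N (\<lambda>j. int j ^ t)"
  shows "d dvd Asum n N (\<lambda>j. int j ^ l) - int (Stirling l m) * (int (n choose (m*N)) * (-1)^(m*N) * fact m)"
proof -
  have kle: "k div N \<le> m" if "k \<le> n" for k using that m by (simp add: div_le_mono)
  have A: "Asum n N (\<lambda>j. int j ^ l) = (\<Sum>i\<le>l. int (Stirling l i) * Asum n N (ff i))"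
    by (simp add: stirling_ff Asum_sum Asum_cmult)
  have low: "d dvd Asum n N (ff i)" if "i < m" for i
  proof -
    have "d dvd Asum n N (\<lambda>j. poly (ffp i) (int j))"
      using degree_ffp[of i] that mom by (intro Asum_poly[of _ m]) auto
    moreover have "(\<lambda>j. poly (ffp i) (int j)) = ff i" by (rule ext) (simp add: ff_poly)
    ultimately show ?thesis by simp
  qed
  have high: "Asum n N (ff i) = 0" if "m < i" for i
    unfolding Asum_def
  proof (intro sum.neutral ballI)
    fix k assume "k \<in> {k. k \<le> n \<and> N dvd k}"
    then have "k div N < i" using kle that by fastforce
    then show "int (n choose k) * (-1)^k * ff i (k div N) = 0" by (simp add: ff_zero_less)
  qed
  have mid: "Asum n N (ff m) = int (n choose (m*N)) * (-1)^(m*N) * fact m"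
  proof -
    have mem: "m*N \<in> {k. k \<le> n \<and> N dvd k}" using m by (auto simp: mult.commute)
    have "Asum n N (ff m) = int (n choose (m*N)) * (-1)^(m*N) * ff m ((m*N) div N)
        + (\<Sum>k\<in>{k. k \<le> n \<and> N dvd k} - {m*N}. int (n choose k) * (-1)^k * ff m (k div N))"
      unfolding Asum_def by (subst sum.remove[OF _ mem]) auto
    also have "(\<Sum>k\<in>{k. k \<le> n \<and> N dvd k} - {m*N}. int (n choose k) * (-1)^k * ff m (k div N)) = 0"
    proof (intro sum.neutral ballI)
      fix k assume k: "k \<in> {k. k \<le> n \<and> N dvd k} - {m*N}"
      then have "k div N \<noteq> m" using N by (auto elim!: dvdE)
      then have "k div N < m" using kle k by (simp add: le_neq_implies_less)
      then show "int (n choose k) * (-1)^k * ff m (k div N) = 0" by (simp add: ff_zero_less)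
    qed
    finally show ?thesis using N by (simp add: ff_same)
  qed
  have ml: "m \<in> {..l}" using lm by simp
  have "Asum n N (\<lambda>j. int j ^ l) = int (Stirling l m) * Asum n N (ff m)
      + (\<Sum>i\<in>{..l} - {m}. int (Stirling l i) * Asum n N (ff i))"
    unfolding A by (subst sum.remove[OF _ ml]) auto
  moreover have "d dvd (\<Sum>i\<in>{..l} - {m}. int (Stirling l i) * Asum n N (ff i))"
  proof (intro dvd_sum)
    fix i assume "i \<in> {..l} - {m}"
    then have "i < m \<or> m < i" by auto
    then show "d dvd int (Stirling l i) * Asum n N (ff i)"
      using low high by auto
  qed
  ultimately show ?thesis by (simp add: mid)
qed

lemma log_bound:
  assumes "1 \<le> n div 2^\<alpha>"
  shows "n div 2^\<alpha> < 2^(nat \<lfloor>log 2 (real n / 2^\<alpha>)\<rfloor> + 1)"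
proof (rule ccontr)
  define x where "x = real n / 2^\<alpha>"
  define L where "L = nat \<lfloor>log 2 x\<rfloor>"
  assume "\<not> n div 2^\<alpha> < 2^(nat \<lfloor>log 2 (real n / 2^\<alpha>)\<rfloor> + 1)"
  then have c: "2^(L+1) \<le> n div 2^\<alpha>" unfolding L_def x_def by simp
  have "(n div 2^\<alpha>) * 2^\<alpha> \<le> n" by simp
  then have "real ((n div 2^\<alpha>) * 2^\<alpha>) \<le> real n" by (simp only: of_nat_le_iff)
  then have "real (n div 2^\<alpha>) * 2^\<alpha> \<le> real n" by simp
  then have mx: "real (n div 2^\<alpha>) \<le> x" unfolding x_def by (simp add: field_simps)
  have x1: "1 \<le> x" using mx assms by linarith
  have "real (2^(L+1)) \<le> real (n div 2^\<alpha>)" using c by (simp only: of_nat_le_iff)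
  then have "real (2^(L+1)) \<le> x" using mx by linarith
  then have "(2::real)^(L+1) \<le> x" by simp
  then have "log 2 (2^(L+1)) \<le> log 2 x" using log_le_cancel_iff[of 2 "2^(L+1)" x] x1 by simp
  moreover have "log 2 ((2::real)^(L+1)) = real (L+1)" by (rule log_pow_cancel) auto
  ultimately have "real (L+1) \<le> log 2 x" by linarith
  then have "int (L+1) \<le> \<lfloor>log 2 x\<rfloor>" by (simp add: le_floor_iff)
  moreover have "0 \<le> \<lfloor>log 2 x\<rfloor>" using x1 by simp
  ultimately show False unfolding L_def by simp
qed


theorem theorem1p8:
  fixes \<alpha> n :: nat and l :: int
  assumes "1 \<le> n div 2 ^ \<alpha>"
    and "int (n div 2 ^ \<alpha>) \<le> l"
    and "[l = int (n div 2 ^ \<alpha>)] (mod 2 ^ nat \<lfloor>log 2 (real n / 2 ^ \<alpha>)\<rfloor>)"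
  shows "(\<Sum>k\<in>{k. k \<le> n \<and> 2 ^ \<alpha> dvd k}. int (n choose k) * (-1) ^ k * int (k div 2 ^ \<alpha>) ^ nat l) \<noteq> 0
    \<and> multiplicity (2::int) (\<Sum>k\<in>{k. k \<le> n \<and> 2 ^ \<alpha> dvd k}. int (n choose k) * (-1) ^ k * int (k div 2 ^ \<alpha>) ^ nat l)
      = multiplicity (2::nat) (fact (n div 2 ^ \<alpha>))"
proof -
  define N where "N = (2::nat)^\<alpha>"
  define m where "m = n div N"
  define L' where "L' = nat l"
  define e where "e = v2 (fact m)"
  define L where "L = nat \<lfloor>log 2 (real n / 2 ^ \<alpha>)\<rfloor>"
  have m1: "1 \<le> m" using assms(1) by (simp add: m_def N_def)
  have lL: "l = int L'" using assms(1,2) by (simp add: L'_def)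
  have mL: "m \<le> L'" using assms(2) lL by (simp add: m_def N_def)
  have N0: "N > 0" by (simp add: N_def)
  have mom: "\<forall>t<m. (2::int)^(e+1) dvd Asum n N (\<lambda>j. int j ^ t)"
  proof (intro allI impI)
    fix t assume t: "t < m"
    show "(2::int)^(e+1) dvd Asum n N (\<lambda>j. int j ^ t)"
    proof (cases "\<alpha> = 0")
      case True
      then have N1: "N = 1" by (simp add: N_def)
      then have mn: "m = n" by (simp add: m_def)
      have "Asum n N (\<lambda>j. int j ^ t) = (\<Sum>k\<le>n. int (n choose k) * (-1)^k * int k ^ t)"
        unfolding Asum_def N1 by (intro sum.cong) auto
      also have "\<dots> = 0" using t mn by (intro alt_moment) simp
      finally show ?thesis by simp
    next
      case False
      then have a1: "\<alpha> \<ge> 1" by simp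
      define K where "K = (2::nat)^(\<alpha>-1)"
      have NK: "N = K * 2" unfolding N_def K_def using a1 by (metis Suc_diff_le diff_Suc_1 power_Suc mult.commute)
      define q where "q = n div K"
      have "m = q div 2" unfolding m_def q_def NK by (simp add: div_mult2_eq)
      then have "2*m \<le> q" by simp
      then have "v2 (fact (2*m)) \<le> v2 (fact q)" by (rule v2_fact_mono)
      then have v: "m + e \<le> v2 (fact q)" by (simp add: v2_fact2 e_def)
      have mb: "(2::int)^v2 (fact q) dvd
          (\<Sum>s\<le>n. if s mod N = 0 then int (n choose s) * (2 * int (s div N))^t else 0)"
        using moment_bound[OF a1, of n t] unfolding q_def K_def N_def .
      have evN: "even N" using a1 by (simp add: N_def)
      have "(\<Sum>s\<le>n. if s mod N = 0 then int (n choose s) * (2 * int (s div N))^t else 0)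
          = (\<Sum>s\<in>{s\<in>{..n}. s mod N = 0}. int (n choose s) * (2 * int (s div N))^t)"
        by (rule sum.inter_filter[symmetric]) simp
      also have "{s\<in>{..n}. s mod N = 0} = {k. k \<le> n \<and> N dvd k}" by auto
      also have "(\<Sum>s\<in>{k. k \<le> n \<and> N dvd k}. int (n choose s) * (2 * int (s div N))^t)
          = 2^t * Asum n N (\<lambda>j. int j ^ t)"
        unfolding Asum_def sum_distrib_left
      proof (intro sum.cong refl)
        fix s assume "s \<in> {k. k \<le> n \<and> N dvd k}"
        then have "even s" using evN by (auto intro: dvd_trans)
        then show "int (n choose s) * (2 * int (s div N))^t = 2^t * (int (n choose s) * (-1)^s * int (s div N) ^ t)"
          by (simp add: power_mult_distrib)
      qed
      finally have f1: "(2::int)^v2 (fact q) dvd 2^t * Asum n N (\<lambda>j. int j ^ t)" using mb by simp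
      have f2: "(2::int)^t * 2^(e+1) dvd 2^v2 (fact q)"
        unfolding power_add[symmetric] using v t by (intro le_imp_power_dvd) simp
      have "(2::int)^t * 2^(e+1) dvd 2^t * Asum n N (\<lambda>j. int j ^ t)" using dvd_trans[OF f2 f1] .
      then show ?thesis by simp
    qed
  qed
  have "(2::int)^(e+1) dvd Asum n N (\<lambda>j. int j ^ L') - int (Stirling L' m) * (int (n choose (m*N)) * (-1)^(m*N) * fact m)"
    by (rule assembly[OF N0 m_def mL mom])
  then obtain z where z: "Asum n N (\<lambda>j. int j ^ L') = int (Stirling L' m) * (int (n choose (m*N)) * (-1)^(m*N) * fact m) + 2^(e+1) * z"
    by (metis dvdE add_diff_cancel_left' diff_add_cancel add.commute)
  obtain u where u: "(fact m :: int) = 2^e * u" "\<not> 2 dvd u"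
    unfolding e_def by (rule multiplicity_decompose'[of "fact m :: int" 2]) auto
  have oddS: "odd (Stirling L' m)"
  proof -
    have "[l = int m] (mod 2^L)" using assms(3) unfolding L_def m_def N_def by simp
    then have "(2::int)^L dvd l - int m" by (simp add: cong_iff_dvd_diff)
    then have "(2::int)^L dvd int (L' - m)" using lL mL by (simp add: of_nat_diff)
    then have "(2::nat)^L dvd L' - m" by (metis of_nat_dvd_iff of_nat_numeral of_nat_power)
    then obtain t where t: "L' - m = t * 2^L" by (auto elim!: dvdE simp: mult.commute)
    define c where "c = (m+1) div 2"
    have c1: "c \<ge> 1" using m1 by (simp add: c_def)
    have "m < 2^(L+1)" using log_bound[OF assms(1)] unfolding L_def m_def N_def .
    then have cL: "c - 1 < 2^L" unfolding c_def by simp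
    have "odd ((t * 2^L + (c - 1)) choose (c - 1))" by (rule odd_choose_lucas[OF cL])
    moreover have "(L' - m) + c - 1 = t * 2^L + (c - 1)" using t c1 by simp
    moreover have "even (Stirling (m + (L' - m)) m) = even (((L' - m) + c - 1) choose (c - 1))"
      using stirling_parity[OF m1, of "L' - m"] unfolding c_def by simp
    ultimately show ?thesis using mL by simp
  qed
  have oddC: "odd (n choose (m*N))"
  proof -
    have mN: "m * N \<le> n" by (simp add: m_def)
    have "n = m * 2^\<alpha> + n mod N" using div_mult_mod_eq[of n "2^\<alpha>"] by (simp add: m_def N_def)
    moreover have "n mod N < 2^\<alpha>" using N0 by (simp add: N_def)
    ultimately have "odd (n choose (n mod N))" using odd_choose_lucas[of "n mod N" \<alpha> m] by simp
    moreover have "n - m * N = n mod N" by (simp add: m_def minus_div_mult_eq_mod)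
    ultimately show ?thesis using binomial_symmetric[OF mN] by simp
  qed
  define w where "w = int (Stirling L' m) * int (n choose (m*N)) * (-1)^(m*N) * u + 2 * z"
  have oddw: "odd w" unfolding w_def using oddS oddC u(2) by simp
  have A: "Asum n N (\<lambda>j. int j ^ L') = 2^e * w"
    unfolding z u(1) w_def by (simp add: algebra_simps power_add)
  have nz: "Asum n N (\<lambda>j. int j ^ L') \<noteq> 0" using A oddw by auto
  have v: "v2 (Asum n N (\<lambda>j. int j ^ L')) = e"
    using A oddw by (intro multiplicity_decomposeI) auto
  have S: "(\<Sum>k\<in>{k. k \<le> n \<and> 2 ^ \<alpha> dvd k}. int (n choose k) * (-1) ^ k * int (k div 2 ^ \<alpha>) ^ nat l)
      = Asum n N (\<lambda>j. int j ^ L')"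
    by (simp add: Asum_def N_def L'_def)
  have "e = multiplicity (2::nat) (fact (n div 2 ^ \<alpha>))"
    unfolding e_def m_def N_def by (metis v2_int of_nat_fact)
  then show ?thesis using S nz v by simp
qed

end
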